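(* Let $L>0$, $M>0$ and let $N$ satisfy $$0\le N\le \frac{4M}{L^3}\,\sigma(\sqrt M L).$$ Let $p\in L^1[0,L]$ and let $y\in W^{4,1}[0,L]$ be the solution of $$y^{(4)}(x)-My''(x)+N\int_0^L y(t)\,dt=p(x)\ \ \text{a.e. in }(0,L),\qquad y(0)=y(L)=y''(0)=y''(L)=0.$$ If $p\ge 0$ a.e., then $y\ge 0$ and $y''\le 0$ on $[0,L]$. If $p\le 0$ a.e., then $y\le0$ and $y''\ge 0$ on $[0,L]$.
   Context: For $t>0$, $$\sigma(t):=\frac{3t^3}{6t\cosh t+6t-12\sinh t-t^3}.$$ (The denominator is positive for $t>0$.) *)

theory Defs
  imports "HOL-Analysis.Analysis"
begin

definition sigma :: "real \<Rightarrow> real" where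
  "sigma t = 3 * t ^ 3 / (6 * t * cosh t + 6 * t - 12 * sinh t - t ^ 3)"

text \<open>Membership of y in W^{4,1}[0,L], with its derivatives made explicit:
  y, y1, y2 are continuously chained classical derivatives on [0,L] (one-sided at
  the endpoints), y3 is absolutely continuous, i.e. the indefinite integral of an
  L^1 function y4 (its a.e. derivative).\<close>
definition W41_on :: "real \<Rightarrow> (real \<Rightarrow> real) \<Rightarrow> (real \<Rightarrow> real) \<Rightarrow> (real \<Rightarrow> real)
    \<Rightarrow> (real \<Rightarrow> real) \<Rightarrow> (real \<Rightarrow> real) \<Rightarrow> bool" where
  "W41_on L y y1 y2 y3 y4 \<longleftrightarrow>
     (\<forall>x\<in>{0..L}. (y has_real_derivative y1 x) (at x within {0..L})
               \<and> (y1 has_real_derivative y2 x) (at x within {0..L})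
               \<and> (y2 has_real_derivative y3 x) (at x within {0..L}))
   \<and> y4 absolutely_integrable_on {0..L}
   \<and> (\<forall>x\<in>{0..L}. y3 x = y3 0 + integral {0..x} y4)"

end

theory Submission
  imports Defs
begin

lemma cm_ai:
  fixes f g :: "real \<Rightarrow> real"
  assumes "continuous_on {a..b} f" "g absolutely_integrable_on {a..b}"
  shows "(\<lambda>x. f x * g x) absolutely_integrable_on {a..b}"
  by (rule absolutely_integrable_bounded_measurable_product_real)
     (use assms in \<open>auto intro: continuous_imp_measurable_on_sets_lebesgue compact_imp_bounded compact_continuous_image\<close>)

lemma icm:
  fixes f :: "real \<Rightarrow> real"
  assumes "f integrable_on S"
  shows "(\<lambda>x. c * f x) integrable_on S"
  using integrable_on_cmult_left[of f S c] assms by simp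

lemma int_sub:
  fixes F :: "real \<Rightarrow> real"
  assumes "F integrable_on {a..b}" "a \<le> c" "c \<le> x" "x \<le> b"
  shows "integral {a..x} F - integral {a..c} F = integral {c..x} F"
proof -
  have i: "F integrable_on {a..x}" using assms integrable_on_subinterval by fastforce
  show ?thesis using Henstock_Kurzweil_Integration.integral_combine[OF assms(2) assms(3) i] by simp
qed

lemma PR:
  fixes g g1 h Y :: "real \<Rightarrow> real"
  assumes ab: "a \<le> b"
    and gd: "\<And>x. x \<in> {a..b} \<Longrightarrow> (g has_real_derivative g1 x) (at x within {a..b})"
    and g1c: "continuous_on {a..b} g1"
    and h: "h absolutely_integrable_on {a..b}"
    and Y: "\<And>x. x \<in> {a..b} \<Longrightarrow> Y x = Y a + integral {a..x} h"
  shows "integral {a..b} (\<lambda>x. g x * h x) = g b * Y b - g a * Y a - integral {a..b} (\<lambda>x. g1 x * Y x)"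
proof -
  have gc: "continuous_on {a..b} g"
    using gd by (meson DERIV_continuous continuous_on_eq_continuous_within)
  have hi: "h integrable_on {a..b}" using h absolutely_integrable_on_def by blast
  have habs: "(\<lambda>x. \<bar>h x\<bar>) integrable_on {a..b}" using h unfolding absolutely_integrable_on_def real_norm_def by blast
  have Yc: "continuous_on {a..b} Y"
  proof -
    have "continuous_on {a..b} (\<lambda>x. Y a + integral {a..x} h)"
      by (intro continuous_intros indefinite_integral_continuous_1 hi)
    then show ?thesis using Y by (metis (no_types, lifting) continuous_on_cong)
  qed
  have "bounded (g1 ` {a..b})"
    by (intro compact_imp_bounded compact_continuous_image g1c compact_Icc)
  then obtain B where B: "\<And>x. x \<in> {a..b} \<Longrightarrow> \<bar>g1 x\<bar> \<le> B"
    unfolding bounded_real by blast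
  have B0: "0 \<le> B" using B[of a] ab by auto
  define V where "V x = integral {a..x} (\<lambda>t. \<bar>h t\<bar>)" for x
  have Vc: "continuous_on {a..b} V"
    unfolding V_def by (intro indefinite_integral_continuous_1 habs)
  have ghi: "(\<lambda>x. g x * h x) integrable_on {a..b}"
    using cm_ai[OF gc h] absolutely_integrable_on_def by blast
  have g1Yi: "(\<lambda>x. g1 x * Y x) integrable_on {a..b}"
    by (intro integrable_continuous_interval continuous_intros g1c Yc)
  define \<Phi> where "\<Phi> c = integral {a..c} (\<lambda>x. g x * h x) - g c * Y c + g a * Y a
      + integral {a..c} (\<lambda>x. g1 x * Y x)" for c
  have Ydiff: "Y x - Y c = integral {c..x} h" if "a \<le> c" "c \<le> x" "x \<le> b" for c x
    using Y[of x] Y[of c] int_sub[OF hi that] that by auto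
  have Vdiff: "V x - V c = integral {c..x} (\<lambda>t. \<bar>h t\<bar>)" if "a \<le> c" "c \<le> x" "x \<le> b" for c x
    using int_sub[OF habs that] unfolding V_def by auto
  have Vmono: "V c \<le> V x" if "a \<le> c" "c \<le> x" "x \<le> b" for c x
  proof -
    have "(\<lambda>t. \<bar>h t\<bar>) integrable_on {c..x}"
      using habs that integrable_on_subinterval by fastforce
    then have "0 \<le> integral {c..x} (\<lambda>t. \<bar>h t\<bar>)" by (intro integral_nonneg) auto
    then show ?thesis using Vdiff[OF that] by simp
  qed
  have gdiff: "\<bar>g x - g y\<bar> \<le> B * \<bar>x - y\<bar>" if "x \<in> {a..b}" "y \<in> {a..b}" for x y
    using field_differentiable_bound[of "{a..b}" g g1 B x y] gd B that by auto
  have key: "\<bar>\<Phi> d - \<Phi> c\<bar> \<le> 2 * B * (d - c) * (V d - V c)"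
    if cd: "a \<le> c" "c \<le> d" "d \<le> b" for c d
  proof -
    have sub: "{c..d} \<subseteq> {a..b}" using cd by auto
    have hi': "h integrable_on {c..d}" using hi sub integrable_on_subinterval by blast
    have ghi': "(\<lambda>x. g x * h x) integrable_on {c..d}" using ghi sub integrable_on_subinterval by blast
    have g1Yi': "(\<lambda>x. g1 x * Y x) integrable_on {c..d}" using g1Yi sub integrable_on_subinterval by blast
    have g1i': "g1 integrable_on {c..d}"
      using g1c sub by (intro integrable_continuous_interval) (auto intro: continuous_on_subset)
    have habs': "(\<lambda>t. \<bar>h t\<bar>) integrable_on {c..d}" using habs sub integrable_on_subinterval by blast
    have gdd: "g d - g c = integral {c..d} g1"
    proof -
      have "(g1 has_integral (g d - g c)) {c..d}"
        apply (rule fundamental_theorem_of_calculus[OF cd(2)])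
        unfolding has_real_derivative_iff_has_vector_derivative[symmetric]
        using gd sub by (meson has_field_derivative_subset subsetD)
      then show ?thesis by (simp add: integral_unique)
    qed
    have e1: "integral {a..d} (\<lambda>x. g x * h x) - integral {a..c} (\<lambda>x. g x * h x) = integral {c..d} (\<lambda>x. g x * h x)"
      by (rule int_sub[OF ghi cd])
    have e2: "integral {a..d} (\<lambda>x. g1 x * Y x) - integral {a..c} (\<lambda>x. g1 x * Y x) = integral {c..d} (\<lambda>x. g1 x * Y x)"
      by (rule int_sub[OF g1Yi cd])
    have e3: "integral {c..d} (\<lambda>x. (g x - g d) * h x) = integral {c..d} (\<lambda>x. g x * h x) - g d * integral {c..d} h"
    proof -
      have "integral {c..d} (\<lambda>x. (g x - g d) * h x) = integral {c..d} (\<lambda>x. g x * h x - g d * h x)"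
        by (simp add: algebra_simps)
      also have "\<dots> = integral {c..d} (\<lambda>x. g x * h x) - integral {c..d} (\<lambda>x. g d * h x)"
        by (rule integral_diff[OF ghi']) (intro icm hi')
      finally show ?thesis by simp
    qed
    have e4: "integral {c..d} (\<lambda>x. g1 x * (Y x - Y c)) = integral {c..d} (\<lambda>x. g1 x * Y x) - Y c * integral {c..d} g1"
    proof -
      have "integral {c..d} (\<lambda>x. g1 x * (Y x - Y c)) = integral {c..d} (\<lambda>x. g1 x * Y x - Y c * g1 x)"
        by (simp add: algebra_simps)
      also have "\<dots> = integral {c..d} (\<lambda>x. g1 x * Y x) - integral {c..d} (\<lambda>x. Y c * g1 x)"
        by (rule integral_diff[OF g1Yi']) (intro icm g1i')
      finally show ?thesis by simp
    qed
    have split: "\<Phi> d - \<Phi> c = integral {c..d} (\<lambda>x. (g x - g d) * h x) + integral {c..d} (\<lambda>x. g1 x * (Y x - Y c))"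
    proof -
      have "\<Phi> d - \<Phi> c = integral {c..d} (\<lambda>x. g x * h x) - g d * Y d + g c * Y c + integral {c..d} (\<lambda>x. g1 x * Y x)"
        unfolding \<Phi>_def using e1 e2 by linarith
      also have "\<dots> = integral {c..d} (\<lambda>x. g x * h x) - g d * (Y d - Y c) - (g d - g c) * Y c + integral {c..d} (\<lambda>x. g1 x * Y x)"
        by (simp add: algebra_simps)
      finally show ?thesis using e3 e4 gdd Ydiff[OF cd] by (simp add: algebra_simps)
    qed
    have b1: "\<bar>integral {c..d} (\<lambda>x. (g x - g d) * h x)\<bar> \<le> B * (d - c) * (V d - V c)"
    proof -
      have i1: "(\<lambda>x. (g x - g d) * h x) integrable_on {c..d}"
        using integrable_diff[OF ghi' icm[OF hi', of "g d"]] by (simp add: algebra_simps)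
      have "\<bar>integral {c..d} (\<lambda>x. (g x - g d) * h x)\<bar> \<le> integral {c..d} (\<lambda>x. B * (d - c) * \<bar>h x\<bar>)"
      proof (rule integral_norm_bound_integral[OF i1, simplified real_norm_def])
        show "(\<lambda>x. B * (d - c) * \<bar>h x\<bar>) integrable_on {c..d}"
          using habs' by (intro icm)
        fix x assume x: "x \<in> {c..d}"
        have "\<bar>g x - g d\<bar> \<le> B * \<bar>x - d\<bar>" using gdiff[of x d] x cd by auto
        also have "\<dots> \<le> B * (d - c)" using x B0 by (intro mult_left_mono) auto
        finally have "\<bar>g x - g d\<bar> \<le> B * (d - c)" .
        then show "\<bar>(g x - g d) * h x\<bar> \<le> B * (d - c) * \<bar>h x\<bar>"
          by (simp add: abs_mult mult_right_mono)
      qed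
      also have "\<dots> = B * (d - c) * (V d - V c)"
        using Vdiff[OF cd] by simp
      finally show ?thesis .
    qed
    have b2: "\<bar>integral {c..d} (\<lambda>x. g1 x * (Y x - Y c))\<bar> \<le> B * (d - c) * (V d - V c)"
    proof -
      have i1: "(\<lambda>x. g1 x * (Y x - Y c)) integrable_on {c..d}"
        using integrable_diff[OF g1Yi' icm[OF g1i', of "Y c"]] by (simp add: algebra_simps)
      have "\<bar>integral {c..d} (\<lambda>x. g1 x * (Y x - Y c))\<bar> \<le> integral {c..d} (\<lambda>x. B * (V d - V c))"
      proof (rule integral_norm_bound_integral[OF i1, simplified real_norm_def])
        show "(\<lambda>x. B * (V d - V c)) integrable_on {c..d}" by (rule integrable_const_ivl)
        fix x assume x: "x \<in> {c..d}"
        have "\<bar>Y x - Y c\<bar> = \<bar>integral {c..x} h\<bar>" using Ydiff[of c x] x cd by auto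
        also have "\<dots> \<le> integral {c..x} (\<lambda>t. \<bar>h t\<bar>)"
          using integral_norm_bound_integral[of h "{c..x}" "\<lambda>t. \<bar>h t\<bar>"] hi habs x cd
            integrable_on_subinterval[of h "{a..b}" c x]
            integrable_on_subinterval[of "\<lambda>t. \<bar>h t\<bar>" "{a..b}" c x] by auto
        also have "\<dots> = V x - V c" using Vdiff[of c x] x cd by auto
        also have "\<dots> \<le> V d - V c" using Vmono[of x d] x cd by auto
        finally have "\<bar>Y x - Y c\<bar> \<le> V d - V c" .
        moreover have "\<bar>g1 x\<bar> \<le> B" using B x cd by auto
        ultimately show "\<bar>g1 x * (Y x - Y c)\<bar> \<le> B * (V d - V c)"
          by (simp add: abs_mult mult_mono')
      qed
      also have "\<dots> = B * (d - c) * (V d - V c)" using cd by simp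
      finally show ?thesis .
    qed
    show ?thesis using split b1 b2 by linarith
  qed
  have key2: "\<bar>\<Phi> d - \<Phi> c\<bar> \<le> 2 * B * \<bar>d - c\<bar> * \<bar>V d - V c\<bar>"
    if "c \<in> {a..b}" "d \<in> {a..b}" for c d
  proof (cases "c \<le> d")
    case True
    then show ?thesis using key[of c d] Vmono[of c d] that by auto
  next
    case False
    then have "\<bar>\<Phi> c - \<Phi> d\<bar> \<le> 2 * B * (c - d) * (V c - V d)" using key[of d c] that by auto
    then show ?thesis using Vmono[of d c] that False by (auto simp: abs_minus_commute)
  qed
  have deriv: "(\<Phi> has_field_derivative 0) (at c within {a..b})" if c: "c \<in> {a..b}" for c
    unfolding has_field_derivative_iff
  proof (rule Lim_null_comparison)
    show "\<forall>\<^sub>F x in at c within {a..b}. norm ((\<Phi> x - \<Phi> c) / (x - c)) \<le> 2 * B * \<bar>V x - V c\<bar>"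
      unfolding eventually_at_filter
    proof (intro always_eventually allI impI)
      fix x assume "x \<noteq> c" "x \<in> {a..b}"
      then show "norm ((\<Phi> x - \<Phi> c) / (x - c)) \<le> 2 * B * \<bar>V x - V c\<bar>"
        using key2[OF c, of x] by (simp add: abs_divide divide_le_eq mult_ac)
    qed
    have "(V \<longlongrightarrow> V c) (at c within {a..b})"
      using Vc c continuous_on_def by blast
    then have "((\<lambda>x. V x - V c) \<longlongrightarrow> 0) (at c within {a..b})"
      by (simp add: LIM_zero)
    then have "((\<lambda>x. \<bar>V x - V c\<bar>) \<longlongrightarrow> 0) (at c within {a..b})"
      using tendsto_rabs_zero by blast
    then show "((\<lambda>x. 2 * B * \<bar>V x - V c\<bar>) \<longlongrightarrow> 0) (at c within {a..b})"
      using tendsto_mult_right_zero by blast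
  qed
  obtain C where "\<forall>x\<in>{a..b}. \<Phi> x = C"
    using has_field_derivative_zero_constant[of "{a..b}" \<Phi>] deriv by auto
  then have "\<Phi> b = \<Phi> a" using ab by auto
  then show ?thesis unfolding \<Phi>_def by simp
qed

lemma c0pos:
  fixes h :: real
  assumes "0 < h"
  shows "sinh h < h * cosh h"
proof -
  have "(\<lambda>x. x * cosh x - sinh x) 0 < (\<lambda>x. x * cosh x - sinh x) h"
  proof (rule DERIV_pos_imp_increasing_open[OF assms])
    fix x :: real assume x: "0 < x" "x < h"
    show "\<exists>y. ((\<lambda>x. x * cosh x - sinh x) has_real_derivative y) (at x) \<and> 0 < y"
      by (rule exI[of _ "x * sinh x"]) (use x in \<open>auto intro!: derivative_eq_intros\<close>)
  next
    show "continuous_on {0..h} (\<lambda>x. x * cosh x - sinh x)" by (intro continuous_intros)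
  qed
  then show ?thesis by simp
qed

lemma cosh_le_h:
  fixes k L x :: real
  assumes "0 < k" "0 \<le> x" "x \<le> L"
  shows "cosh (k * (x - L / 2)) \<le> cosh (k * L / 2)"
proof -
  have "cosh (k * (x - L / 2)) = cosh \<bar>k * (x - L / 2)\<bar>" by simp
  also have "\<dots> \<le> cosh (k * L / 2)"
  proof (subst cosh_real_nonneg_le_iff)
    show "\<bar>k * (x - L / 2)\<bar> \<le> k * L / 2"
      using assms by (auto simp: abs_mult abs_if algebra_simps)
  qed (use assms in auto)
  finally show ?thesis .
qed

lemma psi_bound:
  fixes k L s :: real
  assumes k: "0 < k" and L: "0 < L" and s: "0 \<le> s" "s \<le> L"
  shows "k*k* s*(L-s)/2 - 1 + cosh(k*(s - L/2))/cosh (k*L/2)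
         \<le> (k*L/2 - sinh (k*L/2)/cosh (k*L/2)) * sinh(k* s)"
proof -
  define h where "h = k*L/2"
  have h0: "0 < h" using k L by (simp add: h_def)
  have ch: "0 < cosh h" by simp
  define c0 where "c0 = h - sinh h / cosh h"
  have c0: "0 \<le> c0" using c0pos[OF h0] ch by (simp add: c0_def field_simps)
  define F where "F x = c0* sinh(k*x) - (k*k*x*(L-x)/2 - 1 + cosh(k*(x-L/2))/cosh h)" for x
  define F1 where "F1 x = c0*k*cosh(k*x) - (k*k*(L - 2*x)/2 + k* sinh(k*(x-L/2))/cosh h)" for x
  define F2 where "F2 x = c0*k*k* sinh(k*x) - (-k*k + k*k*cosh(k*(x-L/2))/cosh h)" for x
  have dF: "(F has_real_derivative F1 x) (at x)" for x
    unfolding F_def F1_def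
    by (auto intro!: derivative_eq_intros simp: field_simps)
  have dF1: "(F1 has_real_derivative F2 x) (at x)" for x
    unfolding F1_def F2_def
    by (auto intro!: derivative_eq_intros simp: field_simps)
  have F2: "0 \<le> F2 x" if "0 \<le> x" "x \<le> L" for x
  proof -
    have "cosh(k*(x-L/2)) \<le> cosh h" using cosh_le_h[OF k that] by (simp add: h_def)
    then have "cosh(k*(x-L/2)) / cosh h \<le> 1" using ch by simp
    then have "k*k*cosh(k*(x-L/2))/cosh h \<le> k*k" using k
      by (metis mult_left_mono mult_nonneg_nonneg less_imp_le mult.right_neutral times_divide_eq_right)
    moreover have "0 \<le> c0*k*k* sinh(k*x)" using c0 k that by simp
    ultimately show ?thesis unfolding F2_def by linarith
  qed
  have F10: "F1 0 = 0" unfolding F1_def c0_def h_def using ch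
    by (simp add: field_simps)
  have F0: "F 0 = 0" unfolding F_def h_def using ch by simp
  have F1: "0 \<le> F1 x" if "0 \<le> x" "x \<le> L" for x
  proof -
    have "F1 0 \<le> F1 x"
    proof (rule DERIV_nonneg_imp_nondecreasing[OF that(1)])
      fix z assume "0 \<le> z" "z \<le> x"
      then show "\<exists>y. (F1 has_real_derivative y) (at z) \<and> 0 \<le> y" using dF1[of z] F2[of z] that by auto
    qed
    then show ?thesis using F10 by simp
  qed
  have "F 0 \<le> F s"
  proof (rule DERIV_nonneg_imp_nondecreasing[OF s(1)])
    fix z assume "0 \<le> z" "z \<le> s"
    then show "\<exists>y. (F has_real_derivative y) (at z) \<and> 0 \<le> y" using dF[of z] F1[of z] s by auto
  qed
  then show ?thesis using F0 unfolding F_def c0_def h_def by simp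
qed

lemma w_bound:
  fixes h a :: real
  assumes h: "0 \<le> h" and a: "0 \<le> a" "a \<le> 2*h"
  shows "sinh(2*h) - sinh(2*h - a) - sinh a \<le> 2*(sinh h)^2 * sinh a"
    and "0 \<le> sinh(2*h) - sinh(2*h - a) - sinh a"
proof -
  define d where "d = a - h"
  have A: "sinh a = sinh h * cosh d + cosh h * sinh d" unfolding d_def
    using sinh_add[of h "a-h"] by simp
  have B: "sinh (2*h - a) = sinh h * cosh d - cosh h * sinh d" unfolding d_def
    using sinh_diff[of h "a-h"] by (simp add: algebra_simps)
  have C: "cosh a = cosh h * cosh d + sinh h * sinh d" unfolding d_def
    using cosh_add[of h "a-h"] by simp
  have D: "sinh (2*h) = 2 * sinh h * cosh h" by (rule sinh_double)
  have E: "cosh h * cosh h = sinh h * sinh h + 1" using cosh_square_eq[of h] by (simp add: power2_eq_square)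
  have id: "2*(sinh h)^2 * sinh a - (sinh(2*h) - sinh(2*h - a) - sinh a) = 2* sinh h*cosh h*(cosh a - 1)"
    unfolding A B C D power2_eq_square using E by algebra
  have "0 \<le> 2* sinh h*cosh h*(cosh a - 1)" using h cosh_real_ge_1[of a] by simp
  then show "sinh(2*h) - sinh(2*h - a) - sinh a \<le> 2*(sinh h)^2 * sinh a" using id by linarith
  have "cosh d = cosh \<bar>d\<bar>" by simp
  also have "\<dots> \<le> cosh h"
    using cosh_real_nonneg_le_iff[of "\<bar>d\<bar>" h] h a by (simp add: d_def abs_le_iff)
  finally have "cosh d \<le> cosh h" .
  then have "0 \<le> 2 * sinh h * (cosh h - cosh d)" using h by simp
  moreover have "sinh(2*h) - sinh(2*h - a) - sinh a = 2 * sinh h * (cosh h - cosh d)"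
    unfolding A B D by (simp add: algebra_simps)
  ultimately show "0 \<le> sinh(2*h) - sinh(2*h - a) - sinh a" by simp
qed

lemma const_id:
  fixes k L :: real
  assumes k: "0 < k" and L: "0 < L"
  shows "2 * (sinh (k*L/2))^2 * (k*L/2 - sinh (k*L/2) / cosh (k*L/2)) / (k * (k*k)^2)
        - ((k*k)*L^3/12 - L + 2 * sinh (k*L/2) / (k * cosh (k*L/2))) / (k*k)^2
       = (6*(k*L) * cosh (k*L) + 6*(k*L) - 12 * sinh (k*L) - (k*L)^3) / (12*k*(k*k)^2)"
proof -
  define h where "h = k*L/2"
  define S where "S = sinh h"
  define C where "C = cosh h"
  have kL: "k*L = 2*h" by (simp add: h_def)
  have ch2: "cosh (2*h) = 2*C^2 - 1" unfolding C_def by (rule cosh_double_cosh)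
  have sh2: "sinh (2*h) = 2 * S * C" unfolding S_def C_def by (rule sinh_double)
  have Lk: "L = 2*h/k" using k by (simp add: h_def)
  have E: "C^2 = S^2 + 1" unfolding S_def C_def by (rule cosh_square_eq)
  have ch: "C \<noteq> 0" unfolding C_def by (metis cosh_real_pos less_irrefl)
  define A where "A = 2 * S^2 * (h - S / C)"
  define B where "B = (k*k)*L^3/12 - L + 2 * S / (k * C)"
  have kB: "k * B = (2*h)^3/12 - 2*h + 2*S/C"
  proof -
    have "k * B = k*k*k*L*L*L/12 - k*L + 2*S/C" unfolding B_def using k by (simp add: field_simps power3_eq_cube)
    also have "k*k*k*L*L*L = (k*L)*(k*L)*(k*L)" by simp
    finally show ?thesis unfolding kL by (simp add: power3_eq_cube)
  qed
  have step1: "A / (k * (k*k)^2) - B / (k*k)^2 = 12*(A - k*B) / (12*k*(k*k)^2)"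
    using k by (simp add: divide_simps)
  have f1: "S*S*S/C + S/C = S*C"
  proof -
    have "S*S*S/C + S/C = S*(S*S+1)/C" by (simp add: add_divide_distrib algebra_simps)
    also have "\<dots> = S*(C*C)/C" using E by (simp add: power2_eq_square)
    also have "\<dots> = S*C" using ch by simp
    finally show ?thesis .
  qed
  have step2: "12*(A - k*B) = 6*(2*h) * (2*C^2 - 1) + 6*(2*h) - 12 * (2 * S * C) - (2*h)^3"
  proof -
    have "12*(A - k*B) = 24*h*(S*S + 1) - 24*(S*S*S/C + S/C) - 8*h^3"
      unfolding kB A_def by (simp add: algebra_simps power2_eq_square power3_eq_cube)
    also have "\<dots> = 24*h*(C*C) - 24*(S*C) - 8*h^3" using E f1 by (simp add: power2_eq_square)
    finally show ?thesis by (simp add: algebra_simps power2_eq_square power3_eq_cube)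
  qed
  have "A / (k * (k*k)^2) - B / (k*k)^2 = (6*(k*L) * cosh (k*L) + 6*(k*L) - 12 * sinh (k*L) - (k*L)^3) / (12*k*(k*k)^2)"
    unfolding step1 step2 kL ch2 sh2 ..
  then show ?thesis unfolding A_def B_def S_def C_def h_def .
qed

lemma N_cond:
  fixes M L N :: real
  assumes M: "0 < M" and L: "0 < L" and N: "0 \<le> N"
    and NB: "N \<le> 4 * M / L ^ 3 * sigma (sqrt M * L)"
  shows "N * ((6*(sqrt M * L) * cosh (sqrt M * L) + 6*(sqrt M * L) - 12 * sinh (sqrt M * L) - (sqrt M * L)^3)
            / (12 * sqrt M * (sqrt M * sqrt M)^2)) \<le> 1"
proof -
  define t where "t = sqrt M * L"
  define D where "D = 6*t*cosh t + 6*t - 12 * sinh t - t^3"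
  have k: "0 < sqrt M" using M by simp
  have kk: "sqrt M * sqrt M = M" using M by simp
  have X: "0 < 12 * sqrt M * M^2" using k M by simp
  have t3: "t^3 = sqrt M * M * L^3" unfolding t_def using kk by (simp add: power3_eq_cube)
  have sg: "sigma t = 3 * t^3 / D" unfolding sigma_def D_def by simp
  have "4 * M / L ^ 3 * sigma t = 12 * sqrt M * M^2 / D"
  proof -
    have "L^3 \<noteq> 0" using L by simp
    then have "4 * M / L ^ 3 * (3 * (sqrt M * M * L^3) / D) = 12 * sqrt M * (M * M) / D"
      by (simp add: divide_simps)
    then show ?thesis unfolding sg t3 by (simp add: power2_eq_square)
  qed
  then have NB': "N \<le> 12 * sqrt M * M^2 / D" using NB t_def by simp
  have "N * D \<le> 12 * sqrt M * M^2"
  proof (cases "0 < D")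
    case True then show ?thesis using NB' by (simp add: field_simps)
  next
    case False then have "N * D \<le> 0" using N by (simp add: mult_nonneg_nonpos)
    then show ?thesis using X by linarith
  qed
  then have "N * (D / (12 * sqrt M * M^2)) \<le> 1" using X by (simp add: field_simps)
  then show ?thesis unfolding D_def t_def kk by (simp add: mult.assoc)
qed

lemma kernel:
  fixes k L N x0 s c R Wt :: real and psi :: "real \<Rightarrow> real"
  assumes k: "0 < k" and L: "0 < L" and N: "0 \<le> N"
    and psi: "\<And>s. psi s = s*(L-s)/(2*(k*k)) - 1/(k*k)^2 + cosh(k*(s-L/2))/((k*k)^2 * cosh (k*L/2))"
    and R: "R = 2*(sinh (k*L/2))^2*(k*L/2 - sinh (k*L/2)/cosh (k*L/2))/(k*(k*k)^2)"
    and Wt: "Wt = (sinh(k*L) - sinh(k*(L-x0)) - sinh(k*x0))/k"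
    and NR: "N*R \<le> 1 + N*c" and x0: "0 \<le> x0" "x0 \<le> L"
  shows "0 \<le> s \<Longrightarrow> s \<le> x0 \<Longrightarrow> N*Wt*psi s \<le> (1+N*c)*(sinh(k*(L-x0))* sinh(k* s))"
    and "x0 \<le> s \<Longrightarrow> s \<le> L \<Longrightarrow> N*Wt*psi s \<le> (1+N*c)*(sinh(k*x0)* sinh(k*(L-s)))"
proof -
  define h where "h = k*L/2"
  define c0 where "c0 = h - sinh h / cosh h"
  have h0: "0 < h" using k L by (simp add: h_def)
  have c0: "0 \<le> c0" using c0pos[OF h0] by (simp add: c0_def field_simps)
  have M2: "0 < (k*k)^2" using k by simp
  have psiM: "(k*k)^2 * psi s = k*k* s*(L-s)/2 - 1 + cosh(k*(s - L/2))/cosh (k*L/2)" for s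
    unfolding psi using k by (simp add: field_simps power2_eq_square)
  have pb1: "psi s \<le> c0 * sinh (k* s) / (k*k)^2" if "0 \<le> s" "s \<le> L" for s
  proof -
    have "(k*k)^2 * psi s \<le> c0 * sinh (k* s)"
      using psi_bound[OF k L that] psiM[of s] by (simp add: c0_def h_def)
    then show ?thesis using M2 by (simp add: field_simps)
  qed
  have pb2: "psi s \<le> c0 * sinh (k*(L-s)) / (k*k)^2" if "0 \<le> s" "s \<le> L" for s
  proof -
    have e1: "k*((L-s)-L/2) = -(k*(s-L/2))" by (simp add: algebra_simps)
    have e2: "(L-s)*(L-(L-s)) = s*(L-s)" by simp
    have "psi (L - s) = psi s" unfolding psi e1 e2 cosh_minus ..
    then have "psi s = psi (L - s)" by simp
    then show ?thesis using pb1[of "L-s"] that by simp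
  qed
  have twoh: "k*L = 2*h" by (simp add: h_def)
  have kWt: "k * Wt = sinh(2*h) - sinh(2*h - k*x0) - sinh(k*x0)"
  proof -
    have "k * Wt = sinh(k*L) - sinh(k*(L-x0)) - sinh(k*x0)" unfolding Wt using k by simp
    moreover have "k*(L-x0) = 2*h - k*x0" using twoh by (simp add: right_diff_distrib)
    ultimately show ?thesis using twoh by simp
  qed
  have a1: "0 \<le> k*x0" "k*x0 \<le> 2*h" using k x0 twoh mult_left_mono[OF x0(2), of k] by auto
  have Wt0: "0 \<le> Wt"
  proof -
    have "0 \<le> k*Wt" using w_bound(2)[OF less_imp_le[OF h0] a1] kWt by linarith
    then show ?thesis using k by (simp add: zero_le_mult_iff)
  qed
  have Wb2: "Wt \<le> 2*(sinh h)^2 * sinh (k*x0) / k"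
  proof -
    have "k*Wt \<le> 2*(sinh h)^2 * sinh (k*x0)" using w_bound(1)[OF less_imp_le[OF h0] a1] kWt by linarith
    then show ?thesis using k by (simp add: pos_le_divide_eq mult.commute)
  qed
  have a2: "0 \<le> 2*h - k*x0" "2*h - k*x0 \<le> 2*h" using a1 by auto
  have Wb1: "Wt \<le> 2*(sinh h)^2 * sinh (k*(L-x0)) / k"
  proof -
    have "sinh(2*h) - sinh(2*h - (2*h - k*x0)) - sinh(2*h - k*x0) \<le> 2*(sinh h)^2 * sinh (2*h - k*x0)"
      by (rule w_bound(1)[OF less_imp_le[OF h0] a2])
    then have "k*Wt \<le> 2*(sinh h)^2 * sinh (2*h - k*x0)" using kWt by simp
    moreover have "2*h - k*x0 = k*(L-x0)" using twoh by (simp add: right_diff_distrib)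
    ultimately have "k*Wt \<le> 2*(sinh h)^2 * sinh (k*(L-x0))" by simp
    then show ?thesis using k by (simp add: pos_le_divide_eq mult.commute)
  qed
  have Rdef: "R = 2*(sinh h)^2 * c0 / (k*(k*k)^2)" unfolding R c0_def h_def by simp
  have common: "N*Wt*psi s \<le> (1+N*c)*(A*B)"
    if Wb: "Wt \<le> 2*(sinh h)^2 * A / k" and pb: "psi s \<le> c0 * B / (k*k)^2"
       and A: "0 \<le> A" and B: "0 \<le> B" for A B
  proof -
    have "Wt * psi s \<le> Wt * (c0 * B / (k*k)^2)"
      using pb Wt0 by (rule mult_left_mono)
    also have "\<dots> \<le> (2*(sinh h)^2 * A / k) * (c0 * B / (k*k)^2)"
      using Wb c0 B M2 by (intro mult_right_mono) auto
    also have "\<dots> = R * (A*B)" unfolding Rdef by (simp add: field_simps)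
    finally have "N*(Wt*psi s) \<le> N*(R*(A*B))" using N by (rule mult_left_mono)
    also have "\<dots> = (N*R)*(A*B)" by simp
    also have "\<dots> \<le> (1+N*c)*(A*B)" using NR A B by (intro mult_right_mono) auto
    finally show ?thesis by (simp add: mult.assoc)
  qed
  show "N*Wt*psi s \<le> (1+N*c)*(sinh(k*(L-x0))* sinh(k* s))" if "0 \<le> s" "s \<le> x0"
    by (rule common[OF Wb1 pb1]) (use that x0 k in auto)
  show "N*Wt*psi s \<le> (1+N*c)*(sinh(k*x0)* sinh(k*(L-s)))" if "x0 \<le> s" "s \<le> L"
    by (rule common[OF Wb2 pb2]) (use that x0 k in auto)
qed

lemma rep_deriv:
  fixes F f :: "real \<Rightarrow> real"
  assumes ab: "a \<le> b" and d: "\<And>x. x \<in> {a..b} \<Longrightarrow> (F has_real_derivative f x) (at x within {a..b})"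
    and x: "x \<in> {a..b}"
  shows "F x = F a + integral {a..x} f"
proof -
  have "(f has_integral (F x - F a)) {a..x}"
  proof (rule fundamental_theorem_of_calculus)
    show "a \<le> x" using x by auto
    fix z assume "z \<in> {a..x}"
    then have z: "z \<in> {a..b}" and sub: "{a..x} \<subseteq> {a..b}" using x by auto
    show "(F has_vector_derivative f z) (at z within {a..x})"
      unfolding has_real_derivative_iff_has_vector_derivative[symmetric]
      by (rule has_field_derivative_subset[OF d[OF z] sub])
  qed
  then show ?thesis by (simp add: integral_unique)
qed

lemma rebase:
  fixes F f :: "real \<Rightarrow> real"
  assumes rep: "\<And>x. x \<in> {0..L} \<Longrightarrow> F x = F 0 + integral {0..x} f"
    and fi: "f integrable_on {0..L}" and ab: "0 \<le> a" "a \<le> b" "b \<le> L" and x: "x \<in> {a..b}"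
  shows "F x = F a + integral {a..x} f"
proof -
  have "integral {0..x} f - integral {0..a} f = integral {a..x} f"
    by (rule int_sub[OF fi]) (use ab x in simp_all)
  moreover have "x \<in> {0..L}" "a \<in> {0..L}" using ab x by auto
  note rep[OF this(1)] rep[OF this(2)]
  ultimately show ?thesis by simp
qed

lemma green:
  fixes Z0 Z1 Z2 g g1 g2 :: "real \<Rightarrow> real"
  assumes ab: "a \<le> b"
    and Z0: "\<And>x. x \<in> {a..b} \<Longrightarrow> (Z0 has_real_derivative Z1 x) (at x within {a..b})"
    and Z1: "\<And>x. x \<in> {a..b} \<Longrightarrow> Z1 x = Z1 a + integral {a..x} Z2"
    and Z2: "Z2 absolutely_integrable_on {a..b}"
    and g: "\<And>x. (g has_real_derivative g1 x) (at x)"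
    and g1: "\<And>x. (g1 has_real_derivative g2 x) (at x)"
    and g2: "continuous_on {a..b} g2"
  shows "integral {a..b} (\<lambda>x. g x * Z2 x) = g b * Z1 b - g a * Z1 a - g1 b * Z0 b + g1 a * Z0 a
           + integral {a..b} (\<lambda>x. g2 x * Z0 x)"
proof -
  have g1c: "continuous_on {a..b} g1"
    using DERIV_isCont[OF g1] by (simp add: continuous_at_imp_continuous_on)
  have s1: "integral {a..b} (\<lambda>x. g x * Z2 x) = g b * Z1 b - g a * Z1 a - integral {a..b} (\<lambda>x. g1 x * Z1 x)"
    by (rule PR[OF ab _ g1c Z2 Z1]) (rule has_field_derivative_at_within[OF g])
  have Z2i: "Z2 integrable_on {a..b}" using Z2 absolutely_integrable_on_def by blast
  have Z1c: "continuous_on {a..b} Z1"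
  proof -
    have "continuous_on {a..b} (\<lambda>x. Z1 a + integral {a..x} Z2)"
      by (intro continuous_intros indefinite_integral_continuous_1 Z2i)
    then show ?thesis using Z1 by (metis (no_types, lifting) continuous_on_cong)
  qed
  have s2: "integral {a..b} (\<lambda>x. g1 x * Z1 x) = g1 b * Z0 b - g1 a * Z0 a - integral {a..b} (\<lambda>x. g2 x * Z0 x)"
    by (rule PR[OF ab _ g2 absolutely_integrable_continuous_real[OF Z1c] rep_deriv[OF ab Z0]])
       (rule has_field_derivative_at_within[OF g1])
  show ?thesis using s1 s2 by simp
qed

lemma ae_nonneg:
  fixes f :: "real \<Rightarrow> real"
  assumes fi: "f integrable_on S" and Z: "negligible Z" and nn: "\<And>x. x \<in> S - Z \<Longrightarrow> 0 \<le> f x"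
  shows "0 \<le> integral S f"
proof -
  define f' where "f' x = (if x \<in> Z then 0 else f x)" for x
  have eq: "\<And>x. x \<in> S - Z \<Longrightarrow> f' x = f x" by (simp add: f'_def)
  have "integral S f = integral S f'" by (rule integral_spike[OF Z]) (simp add: f'_def)
  moreover have "0 \<le> integral S f'"
    by (rule integral_nonneg[OF integrable_spike[OF fi Z eq]]) (use nn in \<open>auto simp: f'_def\<close>)
  ultimately show ?thesis by simp
qed

lemma psi_derivs:
  fixes k L x :: real
  assumes k: "0 < k"
  shows "((\<lambda>s. s*(L-s)/(2*(k*k)) - 1/(k*k)^2 + cosh(k*(s-L/2))/((k*k)^2 * cosh (k*L/2)))
          has_real_derivative ((L - 2*x)/(2*(k*k)) + k * sinh(k*(x-L/2))/((k*k)^2 * cosh (k*L/2)))) (at x)"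
    and "((\<lambda>s. (L - 2* s)/(2*(k*k)) + k * sinh(k*(s-L/2))/((k*k)^2 * cosh (k*L/2)))
          has_real_derivative (k*k*(x*(L-x)/(2*(k*k)) - 1/(k*k)^2 + cosh(k*(x-L/2))/((k*k)^2 * cosh (k*L/2))) - x*(L-x)/2)) (at x)"
    and "((\<lambda>s. (L* s^2/2 - s^3/3)/(2*(k*k)) - s/(k*k)^2 + sinh(k*(s-L/2))/(k*(k*k)^2 * cosh (k*L/2)))
          has_real_derivative (x*(L-x)/(2*(k*k)) - 1/(k*k)^2 + cosh(k*(x-L/2))/((k*k)^2 * cosh (k*L/2)))) (at x)"
proof -
  have ch: "cosh (k*L/2) \<noteq> 0" by (metis cosh_real_pos less_irrefl)
  show "((\<lambda>s. s*(L-s)/(2*(k*k)) - 1/(k*k)^2 + cosh(k*(s-L/2))/((k*k)^2 * cosh (k*L/2)))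
          has_real_derivative ((L - 2*x)/(2*(k*k)) + k * sinh(k*(x-L/2))/((k*k)^2 * cosh (k*L/2)))) (at x)"
    using k ch by (auto intro!: derivative_eq_intros simp: field_simps power2_eq_square)
  show "((\<lambda>s. (L - 2* s)/(2*(k*k)) + k * sinh(k*(s-L/2))/((k*k)^2 * cosh (k*L/2)))
          has_real_derivative (k*k*(x*(L-x)/(2*(k*k)) - 1/(k*k)^2 + cosh(k*(x-L/2))/((k*k)^2 * cosh (k*L/2))) - x*(L-x)/2)) (at x)"
    using k ch by (auto intro!: derivative_eq_intros simp: field_simps power2_eq_square)
  show "((\<lambda>s. (L* s^2/2 - s^3/3)/(2*(k*k)) - s/(k*k)^2 + sinh(k*(s-L/2))/(k*(k*k)^2 * cosh (k*L/2)))
          has_real_derivative (x*(L-x)/(2*(k*k)) - 1/(k*k)^2 + cosh(k*(x-L/2))/((k*k)^2 * cosh (k*L/2)))) (at x)"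
    using k ch by (auto intro!: derivative_eq_intros simp: field_simps power2_eq_square)
qed

lemma ftc_int:
  fixes F f :: "real \<Rightarrow> real"
  assumes ab: "a \<le> b" and d: "\<And>x. (F has_real_derivative f x) (at x)"
  shows "integral {a..b} f = F b - F a"
proof -
  have "(f has_integral (F b - F a)) {a..b}"
    by (rule fundamental_theorem_of_calculus[OF ab])
       (simp add: has_real_derivative_iff_has_vector_derivative[symmetric] has_field_derivative_at_within[OF d])
  then show ?thesis by (simp add: integral_unique)
qed

lemma main_pos:
  fixes L M N :: real and p y y1 y2 y3 y4 :: "real \<Rightarrow> real"
  assumes L: "L > 0" and M: "M > 0"
    and N: "0 \<le> N" and NB: "N \<le> 4 * M / L ^ 3 * sigma (sqrt M * L)"
    and pai: "p absolutely_integrable_on {0..L}"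
    and W: "W41_on L y y1 y2 y3 y4"
    and eq: "AE x in lebesgue. x \<in> {0..L} \<longrightarrow>
           y4 x - M * y2 x + N * integral {0..L} y = p x"
    and y0: "y 0 = 0" and yL: "y L = 0" and y20: "y2 0 = 0" and y2L: "y2 L = 0"
    and ppos: "AE x in lebesgue. x \<in> {0..L} \<longrightarrow> p x \<ge> 0"
  shows "\<forall>x\<in>{0..L}. y x \<ge> 0 \<and> y2 x \<le> 0"
proof -
  define k where "k = sqrt M"
  have k: "0 < k" using M k_def by simp
  have kk: "k * k = M" using M k_def by simp
  define I where "I = integral {0..L} y"
  define q where "q x = p x + M * y2 x - N * I" for x
  have dy: "\<And>x. x\<in>{0..L} \<Longrightarrow> (y has_real_derivative y1 x) (at x within {0..L})"
    and dy1: "\<And>x. x\<in>{0..L} \<Longrightarrow> (y1 has_real_derivative y2 x) (at x within {0..L})"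
    and dy2: "\<And>x. x\<in>{0..L} \<Longrightarrow> (y2 has_real_derivative y3 x) (at x within {0..L})"
    and y4ai: "y4 absolutely_integrable_on {0..L}"
    and y3rep: "\<And>x. x\<in>{0..L} \<Longrightarrow> y3 x = y3 0 + integral {0..x} y4"
  proof -
    have W': "(\<forall>x\<in>{0..L}. (y has_real_derivative y1 x) (at x within {0..L})
               \<and> (y1 has_real_derivative y2 x) (at x within {0..L})
               \<and> (y2 has_real_derivative y3 x) (at x within {0..L}))
      \<and> y4 absolutely_integrable_on {0..L}
      \<and> (\<forall>x\<in>{0..L}. y3 x = y3 0 + integral {0..x} y4)" using W unfolding W41_on_def .
    show "\<And>x. x\<in>{0..L} \<Longrightarrow> (y has_real_derivative y1 x) (at x within {0..L})"
      "\<And>x. x\<in>{0..L} \<Longrightarrow> (y1 has_real_derivative y2 x) (at x within {0..L})"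
      "\<And>x. x\<in>{0..L} \<Longrightarrow> (y2 has_real_derivative y3 x) (at x within {0..L})"
      "y4 absolutely_integrable_on {0..L}"
      "\<And>x. x\<in>{0..L} \<Longrightarrow> y3 x = y3 0 + integral {0..x} y4"
      using W' by blast+
  qed
  have y2c: "continuous_on {0..L} y2"
    using dy2 by (meson DERIV_continuous continuous_on_eq_continuous_within)
  have yc: "continuous_on {0..L} y"
    using dy by (meson DERIV_continuous continuous_on_eq_continuous_within)
  obtain Z1 where Z1: "negligible Z1" and Z1q: "\<And>x. x \<in> {0..L} - Z1 \<Longrightarrow> y4 x = q x"
  proof -
    obtain Z where Z: "\<And>x. x \<in> space lebesgue - Z \<Longrightarrow> (x \<in> {0..L} \<longrightarrow>
           y4 x - M * y2 x + N * integral {0..L} y = p x)" and Zn: "Z \<in> null_sets lebesgue"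
      using AE_E3[OF eq] by blast
    have "negligible Z" using Zn negligible_iff_null_sets by blast
    moreover have "y4 x = q x" if "x \<in> {0..L} - Z" for x
      using Z[of x] that unfolding q_def I_def by auto
    ultimately show ?thesis using that by blast
  qed
  obtain Z2 where Z2: "negligible Z2" and Z2p: "\<And>x. x \<in> {0..L} - Z2 \<Longrightarrow> 0 \<le> p x"
  proof -
    obtain Z where Z: "\<And>x. x \<in> space lebesgue - Z \<Longrightarrow> (x \<in> {0..L} \<longrightarrow> p x \<ge> 0)"
      and Zn: "Z \<in> null_sets lebesgue"
      using AE_E3[OF ppos] by blast
    have "negligible Z" using Zn negligible_iff_null_sets by blast
    moreover have "0 \<le> p x" if "x \<in> {0..L} - Z" for x
      using Z[of x] that by auto
    ultimately show ?thesis using that by blast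
  qed
  have qai: "q absolutely_integrable_on {0..L}"
  proof -
    have "(\<lambda>x. M * y2 x - N * I) absolutely_integrable_on {0..L}"
      by (intro absolutely_integrable_continuous_real continuous_intros y2c)
    then have "(\<lambda>x. p x + (M * y2 x - N * I)) absolutely_integrable_on {0..L}"
      using pai by (rule set_integral_add(1)[rotated])
    then show ?thesis unfolding q_def by (simp add: algebra_simps)
  qed
  have qi: "q integrable_on {0..L}" using qai absolutely_integrable_on_def by blast
  have y3q: "y3 x = y3 0 + integral {0..x} q" if x: "x \<in> {0..L}" for x
  proof -
    have "integral {0..x} y4 = integral {0..x} q"
      by (rule integral_spike[OF Z1]) (use Z1q x in auto)
    then show ?thesis using y3rep[OF x] by simp
  qed
  have GQ: "integral {a..b} (\<lambda>x. g x * q x) = g b * y3 b - g a * y3 a - g1 b * y2 b + g1 a * y2 a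
           + integral {a..b} (\<lambda>x. g2 x * y2 x)"
    if ab: "0 \<le> a" "a \<le> b" "b \<le> L" and g: "\<And>x. (g has_real_derivative g1 x) (at x)"
      and g1: "\<And>x. (g1 has_real_derivative g2 x) (at x)" and g2: "continuous_on {a..b} g2"
    for a b g g1 g2
  proof (rule green[OF ab(2) _ _ _ g g1 g2])
    have sub: "{a..b} \<subseteq> {0..L}" using ab by auto
    show "(y2 has_real_derivative y3 x) (at x within {a..b})" if "x \<in> {a..b}" for x
      using has_field_derivative_subset[OF dy2 sub] that sub by auto
    show "y3 x = y3 a + integral {a..x} q" if "x \<in> {a..b}" for x
      by (rule rebase[OF y3q qi ab that]) auto
    show "q absolutely_integrable_on {a..b}"
      by (rule absolutely_integrable_on_subinterval[OF qai sub])
  qed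
  have GY: "integral {a..b} (\<lambda>x. g x * y2 x) = g b * y1 b - g a * y1 a - g1 b * y b + g1 a * y a
           + integral {a..b} (\<lambda>x. g2 x * y x)"
    if ab: "0 \<le> a" "a \<le> b" "b \<le> L" and g: "\<And>x. (g has_real_derivative g1 x) (at x)"
      and g1: "\<And>x. (g1 has_real_derivative g2 x) (at x)" and g2: "continuous_on {a..b} g2"
    for a b g g1 g2
  proof (rule green[OF ab(2) _ _ _ g g1 g2])
    have sub: "{a..b} \<subseteq> {0..L}" using ab by auto
    show "(y has_real_derivative y1 x) (at x within {a..b})" if "x \<in> {a..b}" for x
      using has_field_derivative_subset[OF dy sub] that sub by auto
    show "y1 x = y1 a + integral {a..x} y2" if "x \<in> {a..b}" for x
    proof (rule rep_deriv[OF ab(2) _ that])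
      show "(y1 has_real_derivative y2 z) (at z within {a..b})" if "z \<in> {a..b}" for z
        using has_field_derivative_subset[OF dy1 sub] that sub by auto
    qed
    show "y2 absolutely_integrable_on {a..b}"
      by (rule absolutely_integrable_continuous_real[OF continuous_on_subset[OF y2c sub]])
  qed
  have gpi: "(\<lambda>x. g x * p x) integrable_on {a..b}"
    if ab: "0 \<le> a" "a \<le> b" "b \<le> L" and g: "continuous_on {a..b} g" for a b g
  proof -
    have sub: "{a..b} \<subseteq> {0..L}" using ab by auto
    show ?thesis using cm_ai[OF g absolutely_integrable_on_subinterval[OF pai sub]]
      absolutely_integrable_on_def by blast
  qed
  have QS: "integral {a..b} (\<lambda>x. g x * q x) = integral {a..b} (\<lambda>x. g x * p x)
        + M * integral {a..b} (\<lambda>x. g x * y2 x) - N * I * integral {a..b} g"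
    if ab: "0 \<le> a" "a \<le> b" "b \<le> L" and g: "continuous_on {a..b} g" for a b g
  proof -
    have sub: "{a..b} \<subseteq> {0..L}" using ab by auto
    have i1: "(\<lambda>x. g x * p x) integrable_on {a..b}" by (rule gpi[OF ab g])
    have i2: "(\<lambda>x. M * (g x * y2 x)) integrable_on {a..b}"
      by (intro integrable_continuous_interval continuous_intros g continuous_on_subset[OF y2c sub])
    have i3: "(\<lambda>x. N * I * g x) integrable_on {a..b}"
      by (intro integrable_continuous_interval continuous_intros g)
    have "integral {a..b} (\<lambda>x. g x * q x) = integral {a..b} (\<lambda>x. (g x * p x + M * (g x * y2 x)) - N * I * g x)"
      unfolding q_def by (simp add: algebra_simps)
    also have "\<dots> = integral {a..b} (\<lambda>x. g x * p x + M * (g x * y2 x)) - integral {a..b} (\<lambda>x. N * I * g x)"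
      by (rule integral_diff[OF integrable_add[OF i1 i2] i3])
    also have "\<dots> = integral {a..b} (\<lambda>x. g x * p x) + integral {a..b} (\<lambda>x. M * (g x * y2 x)) - integral {a..b} (\<lambda>x. N * I * g x)"
      by (simp add: integral_add[OF i1 i2])
    finally show ?thesis by simp
  qed

  define ch where "ch = cosh (k * L / 2)"
  have ch0: "0 < ch" unfolding ch_def by simp
  define psi where "psi s = s*(L-s)/(2*(k*k)) - 1/(k*k)^2 + cosh(k*(s-L/2))/((k*k)^2 * cosh (k*L/2))" for s
  define psi1 where "psi1 s = (L - 2 * s)/(2*(k*k)) + k * sinh(k*(s-L/2))/((k*k)^2 * cosh (k*L/2))" for s
  define psi2 where "psi2 s = k * k * psi s - s * (L - s) / 2" for s
  have dpsi: "(psi has_real_derivative psi1 x) (at x)" for x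
    unfolding psi_def[abs_def] psi1_def by (rule psi_derivs(1)[OF k])
  have dpsi1: "(psi1 has_real_derivative psi2 x) (at x)" for x
    unfolding psi1_def[abs_def] psi2_def psi_def by (rule psi_derivs(2)[OF k])
  have psic: "continuous_on S psi" for S
    using DERIV_isCont[OF dpsi] by (simp add: continuous_at_imp_continuous_on)
  have psi2c: "continuous_on S psi2" for S
    unfolding psi2_def by (intro continuous_intros psic) auto
  have kLm: "k * (0 - L / 2) = - (k * L / 2)" "k * (L - L / 2) = k * L / 2" by (simp_all add: algebra_simps)
  have psi0: "psi 0 = 0" unfolding psi_def kLm cosh_minus using ch0 unfolding ch_def
    by (simp add: field_simps)
  have psiL: "psi L = 0" unfolding psi_def kLm using ch0 unfolding ch_def
    by (simp add: field_simps)
  define A where "A = integral {0..L} (\<lambda>x. psi x * p x)"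
  define c where "c = integral {0..L} psi"
  have E3: "integral {0..L} (\<lambda>x. psi x * q x) = integral {0..L} (\<lambda>x. psi2 x * y2 x)"
    using GQ[of 0 L psi psi1 psi2, OF _ _ _ dpsi dpsi1 psi2c] L psi0 psiL y20 y2L by simp
  have E3b: "integral {0..L} (\<lambda>x. psi x * q x) = A + M * integral {0..L} (\<lambda>x. psi x * y2 x) - N * I * c"
    using QS[of 0 L psi, OF _ _ _ psic] L unfolding A_def c_def by simp
  have E3c: "integral {0..L} (\<lambda>x. psi2 x * y2 x) = M * integral {0..L} (\<lambda>x. psi x * y2 x)
      - integral {0..L} (\<lambda>x. x * (L - x) / 2 * y2 x)"
  proof -
    have i1: "(\<lambda>x. M * (psi x * y2 x)) integrable_on {0..L}"
      by (intro integrable_continuous_interval continuous_intros psic y2c)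
    have i2: "(\<lambda>x. x * (L - x) / 2 * y2 x) integrable_on {0..L}"
      by (intro integrable_continuous_interval continuous_intros y2c) auto
    have "integral {0..L} (\<lambda>x. psi2 x * y2 x) = integral {0..L} (\<lambda>x. M * (psi x * y2 x) - x * (L - x) / 2 * y2 x)"
      unfolding psi2_def kk by (simp add: algebra_simps)
    also have "\<dots> = integral {0..L} (\<lambda>x. M * (psi x * y2 x)) - integral {0..L} (\<lambda>x. x * (L - x) / 2 * y2 x)"
      by (rule integral_diff[OF i1 i2])
    finally show ?thesis by simp
  qed
  have E4: "integral {0..L} (\<lambda>x. x * (L - x) / 2 * y2 x) = - I"
  proof -
    have d1: "((\<lambda>x. x * (L - x) / 2) has_real_derivative (L - 2 * x) / 2) (at x)" for x
      by (auto intro!: derivative_eq_intros simp: field_simps)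
    have d2: "((\<lambda>x. (L - 2 * x) / 2) has_real_derivative -1) (at x)" for x
      by (auto intro!: derivative_eq_intros simp: field_simps)
    have "integral {0..L} (\<lambda>x. x * (L - x) / 2 * y2 x) = L * (L - L) / 2 * y1 L - 0 * (L - 0) / 2 * y1 0
        - (L - 2 * L) / 2 * y L + (L - 2 * 0) / 2 * y 0 + integral {0..L} (\<lambda>x. -1 * y x)"
      by (rule GY[OF _ _ _ d1 d2]) (use L in auto)
    then show ?thesis using y0 yL unfolding I_def by simp
  qed
  have IA: "I * (1 + N * c) = A"
    using E3 E3b E3c E4 by (simp add: algebra_simps)
  define R where "R = 2*(sinh (k*L/2))^2*(k*L/2 - sinh (k*L/2)/cosh (k*L/2))/(k*(k*k)^2)"
  have cval: "c = ((k*k)*L^3/12 - L + 2 * sinh (k*L/2) / (k * cosh (k*L/2))) / (k*k)^2"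
  proof -
    have "c = ((L*L^2/2 - L^3/3)/(2*(k*k)) - L/(k*k)^2 + sinh(k*(L-L/2))/(k*(k*k)^2 * cosh (k*L/2)))
           - ((L*0^2/2 - 0^3/3)/(2*(k*k)) - 0/(k*k)^2 + sinh(k*(0-L/2))/(k*(k*k)^2 * cosh (k*L/2)))"
      unfolding c_def psi_def by (rule ftc_int[OF less_imp_le[OF L] psi_derivs(3)[OF k]])
    also have "\<dots> = ((k*k)*L^3/12 - L + 2 * sinh (k*L/2) / (k * cosh (k*L/2))) / (k*k)^2"
      unfolding kLm sinh_minus using k ch0 unfolding ch_def
      by (simp add: field_simps power2_eq_square power3_eq_cube)
    finally show ?thesis .
  qed
  have NR: "N * R \<le> 1 + N * c"
  proof -
    have "R - c = (6*(k*L) * cosh (k*L) + 6*(k*L) - 12 * sinh (k*L) - (k*L)^3) / (12*k*(k*k)^2)"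
      unfolding R_def cval by (rule const_id[OF k L])
    moreover have "N * ((6*(k*L) * cosh (k*L) + 6*(k*L) - 12 * sinh (k*L) - (k*L)^3) / (12*k*(k*k)^2)) \<le> 1"
      using N_cond[OF M L N NB] unfolding k_def by simp
    ultimately show ?thesis by (simp add: algebra_simps)
  qed
  have R0: "0 < R"
  proof -
    have h0: "0 < k * L / 2" using k L by simp
    have c0: "0 < k * L / 2 - sinh (k*L/2) / cosh (k*L/2)"
      using c0pos[OF h0] by (simp add: field_simps)
    have s0: "0 < (sinh (k*L/2))^2" using h0 k L by simp
    show ?thesis unfolding R_def using k c0 s0 by (intro divide_pos_pos mult_pos_pos) auto
  qed
  have Nc0: "0 < 1 + N * c"
  proof (cases "N = 0")
    case True then show ?thesis by simp
  next
    case False then have "0 < N * R" using N R0 by simp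
    then show ?thesis using NR by linarith
  qed
  have y2neg: "y2 x0 \<le> 0" if x0: "0 \<le> x0" "x0 \<le> L" for x0
  proof -
    define s0 where "s0 = sinh (k * x0)"
    define sL where "sL = sinh (k * (L - x0))"
    define P1 where "P1 = integral {0..x0} (\<lambda>x. sinh (k * x) * p x)"
    define P2 where "P2 = integral {x0..L} (\<lambda>x. sinh (k * (L - x)) * p x)"
    define S1 where "S1 = integral {0..x0} (\<lambda>x. sinh (k * x))"
    define S2 where "S2 = integral {x0..L} (\<lambda>x. sinh (k * (L - x)))"
    define A1 where "A1 = integral {0..x0} (\<lambda>x. psi x * p x)"
    define A2 where "A2 = integral {x0..L} (\<lambda>x. psi x * p x)"
    define Wt where "Wt = (sinh(k*L) - sinh(k*(L-x0)) - sinh(k*x0))/k"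
    have cs1: "continuous_on S (\<lambda>x. sinh (k * x))" for S by (intro continuous_intros)
    have cs2: "continuous_on S (\<lambda>x. sinh (k * (L - x)))" for S by (intro continuous_intros)
    have cs3: "continuous_on S (\<lambda>x. M * sinh (k * x))" for S by (intro continuous_intros)
    have cs4: "continuous_on S (\<lambda>x. M * sinh (k * (L - x)))" for S by (intro continuous_intros)
    have d1: "((\<lambda>x. sinh (k * x)) has_real_derivative k * cosh (k * x)) (at x)" for x
      by (auto intro!: derivative_eq_intros)
    have d2: "((\<lambda>x. k * cosh (k * x)) has_real_derivative M * sinh (k * x)) (at x)" for x
      by (auto intro!: derivative_eq_intros simp: kk[symmetric])
    have d3: "((\<lambda>x. sinh (k * (L - x))) has_real_derivative - (k * cosh (k * (L - x)))) (at x)" for x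
      by (auto intro!: derivative_eq_intros)
    have d4: "((\<lambda>x. - (k * cosh (k * (L - x)))) has_real_derivative M * sinh (k * (L - x))) (at x)" for x
      by (auto intro!: derivative_eq_intros simp: kk[symmetric])
    have E1a: "integral {0..x0} (\<lambda>x. sinh (k * x) * q x) = sinh (k * x0) * y3 x0 - sinh (k * 0) * y3 0
        - k * cosh (k * x0) * y2 x0 + k * cosh (k * 0) * y2 0 + integral {0..x0} (\<lambda>x. M * sinh (k * x) * y2 x)"
      by (rule GQ[OF _ _ _ d1 d2 cs3]) (use x0 in auto)
    have E1b: "integral {0..x0} (\<lambda>x. sinh (k * x) * q x) = P1 + M * integral {0..x0} (\<lambda>x. sinh (k * x) * y2 x) - N * I * S1"
      unfolding P1_def S1_def by (rule QS[OF _ _ _ cs1]) (use x0 in auto)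
    have E1: "P1 - N * I * S1 = s0 * y3 x0 - k * cosh (k * x0) * y2 x0"
      using E1a E1b y20 unfolding s0_def by (simp add: mult.assoc)
    have E2a: "integral {x0..L} (\<lambda>x. sinh (k * (L - x)) * q x) = sinh (k * (L - L)) * y3 L - sinh (k * (L - x0)) * y3 x0
        - (- (k * cosh (k * (L - L)))) * y2 L + (- (k * cosh (k * (L - x0)))) * y2 x0
        + integral {x0..L} (\<lambda>x. M * sinh (k * (L - x)) * y2 x)"
      by (rule GQ[OF _ _ _ d3 d4 cs4]) (use x0 in auto)
    have E2b: "integral {x0..L} (\<lambda>x. sinh (k * (L - x)) * q x) = P2 + M * integral {x0..L} (\<lambda>x. sinh (k * (L - x)) * y2 x) - N * I * S2"
      unfolding P2_def S2_def by (rule QS[OF _ _ _ cs2]) (use x0 in auto)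
    have E2: "P2 - N * I * S2 = - sL * y3 x0 - k * cosh (k * (L - x0)) * y2 x0"
      using E2a E2b y2L unfolding sL_def by (simp add: mult.assoc)
    have S1v: "S1 = (cosh (k * x0) - 1) / k"
    proof -
      have "S1 = cosh (k * x0) / k - cosh (k * 0) / k" unfolding S1_def
        by (rule ftc_int[OF x0(1)]) (use k in \<open>auto intro!: derivative_eq_intros\<close>)
      then show ?thesis by (simp add: diff_divide_distrib)
    qed
    have S2v: "S2 = (cosh (k * (L - x0)) - 1) / k"
    proof -
      have "S2 = - cosh (k * (L - L)) / k - (- cosh (k * (L - x0)) / k)" unfolding S2_def
        by (rule ftc_int[OF x0(2)]) (use k in \<open>auto intro!: derivative_eq_intros\<close>)
      then show ?thesis by (simp add: diff_divide_distrib)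
    qed
    have shid: "sL * cosh (k * x0) + s0 * cosh (k * (L - x0)) = sinh (k * L)"
    proof -
      have "sinh (k * L) = sinh (k * (L - x0) + k * x0)" by (simp add: algebra_simps)
      also have "\<dots> = sL * cosh (k * x0) + cosh (k * (L - x0)) * s0" unfolding sL_def s0_def by (rule sinh_add)
      finally show ?thesis by simp
    qed
    have num: "sL * (cosh (k * x0) - 1) + s0 * (cosh (k * (L - x0)) - 1) = sinh (k * L) - sL - s0"
      using shid by (simp add: algebra_simps)
    have WtS: "sL * S1 + s0 * S2 = Wt"
    proof -
      have "sL * S1 + s0 * S2 = (sL * (cosh (k * x0) - 1) + s0 * (cosh (k * (L - x0)) - 1)) / k"
        unfolding S1v S2v by (simp add: add_divide_distrib)
      also have "\<dots> = (sinh (k * L) - sL - s0) / k" unfolding num ..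
      finally show ?thesis unfolding Wt_def sL_def s0_def .
    qed
    have star: "- (k * sinh (k * L)) * y2 x0 = sL * P1 + s0 * P2 - N * I * Wt"
    proof -
      have "sL * (P1 - N * I * S1) + s0 * (P2 - N * I * S2) = - k * (sL * cosh (k * x0) + s0 * cosh (k * (L - x0))) * y2 x0"
        unfolding E1 E2 by (simp add: algebra_simps)
      then show ?thesis unfolding shid using WtS[symmetric] by (simp add: algebra_simps)
    qed
    have AA: "A = A1 + A2"
    proof -
      have ii: "(\<lambda>x. psi x * p x) integrable_on {0..L}" by (rule gpi[OF _ _ _ psic]) (use L in auto)
      show ?thesis unfolding A_def A1_def A2_def
        using Henstock_Kurzweil_Integration.integral_combine[OF x0 ii] by simp
    qed
    have K1: "0 \<le> integral {0..x0} (\<lambda>s. ((1 + N * c) * (sL * sinh (k * s)) - N * Wt * psi s) * p s)"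
    proof (rule ae_nonneg[OF _ Z2])
      have "(\<lambda>s. ((1 + N * c) * (sL * sinh (k * s)) - N * Wt * psi s) * p s) integrable_on {0..x0}"
        by (rule gpi) (use x0 in \<open>auto intro!: continuous_intros psic\<close>)
      then show "(\<lambda>s. ((1 + N * c) * (sL * sinh (k * s)) - N * Wt * psi s) * p s) integrable_on {0..x0}" .
      fix s assume s: "s \<in> {0..x0} - Z2"
      have "N * Wt * psi s \<le> (1 + N * c) * (sL * sinh (k * s))"
        unfolding sL_def using kernel(1)[OF k L N psi_def R_def Wt_def NR x0] s by auto
      moreover have "0 \<le> p s" using Z2p[of s] s x0 by auto
      ultimately show "0 \<le> ((1 + N * c) * (sL * sinh (k * s)) - N * Wt * psi s) * p s" by simp
    qed
    have K2: "0 \<le> integral {x0..L} (\<lambda>s. ((1 + N * c) * (s0 * sinh (k * (L - s))) - N * Wt * psi s) * p s)"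
    proof (rule ae_nonneg[OF _ Z2])
      show "(\<lambda>s. ((1 + N * c) * (s0 * sinh (k * (L - s))) - N * Wt * psi s) * p s) integrable_on {x0..L}"
        by (rule gpi) (use x0 in \<open>auto intro!: continuous_intros psic\<close>)
      fix s assume s: "s \<in> {x0..L} - Z2"
      have "N * Wt * psi s \<le> (1 + N * c) * (s0 * sinh (k * (L - s)))"
        unfolding s0_def using kernel(2)[OF k L N psi_def R_def Wt_def NR x0] s by auto
      moreover have "0 \<le> p s" using Z2p[of s] s x0 by auto
      ultimately show "0 \<le> ((1 + N * c) * (s0 * sinh (k * (L - s))) - N * Wt * psi s) * p s" by simp
    qed
    have K1v: "integral {0..x0} (\<lambda>s. ((1 + N * c) * (sL * sinh (k * s)) - N * Wt * psi s) * p s)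
        = (1 + N * c) * sL * P1 - N * Wt * A1"
    proof -
      have i1: "(\<lambda>s. (1 + N * c) * sL * (sinh (k * s) * p s)) integrable_on {0..x0}"
        using gpi[OF _ _ _ cs1, of 0 x0] x0 by (intro icm) auto
      have i2: "(\<lambda>s. N * Wt * (psi s * p s)) integrable_on {0..x0}"
        using gpi[OF _ _ _ psic, of 0 x0] x0 by (intro icm) auto
      have "integral {0..x0} (\<lambda>s. ((1 + N * c) * (sL * sinh (k * s)) - N * Wt * psi s) * p s)
          = integral {0..x0} (\<lambda>s. (1 + N * c) * sL * (sinh (k * s) * p s) - N * Wt * (psi s * p s))"
        by (simp add: algebra_simps)
      also have "\<dots> = integral {0..x0} (\<lambda>s. (1 + N * c) * sL * (sinh (k * s) * p s)) - integral {0..x0} (\<lambda>s. N * Wt * (psi s * p s))"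
        by (rule integral_diff[OF i1 i2])
      finally show ?thesis unfolding P1_def A1_def by simp
    qed
    have K2v: "integral {x0..L} (\<lambda>s. ((1 + N * c) * (s0 * sinh (k * (L - s))) - N * Wt * psi s) * p s)
        = (1 + N * c) * s0 * P2 - N * Wt * A2"
    proof -
      have i1: "(\<lambda>s. (1 + N * c) * s0 * (sinh (k * (L - s)) * p s)) integrable_on {x0..L}"
        using gpi[OF _ _ _ cs2, of x0 L] x0 by (intro icm) auto
      have i2: "(\<lambda>s. N * Wt * (psi s * p s)) integrable_on {x0..L}"
        using gpi[OF _ _ _ psic, of x0 L] x0 by (intro icm) auto
      have "integral {x0..L} (\<lambda>s. ((1 + N * c) * (s0 * sinh (k * (L - s))) - N * Wt * psi s) * p s)
          = integral {x0..L} (\<lambda>s. (1 + N * c) * s0 * (sinh (k * (L - s)) * p s) - N * Wt * (psi s * p s))"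
        by (simp add: algebra_simps)
      also have "\<dots> = integral {x0..L} (\<lambda>s. (1 + N * c) * s0 * (sinh (k * (L - s)) * p s)) - integral {x0..L} (\<lambda>s. N * Wt * (psi s * p s))"
        by (rule integral_diff[OF i1 i2])
      finally show ?thesis unfolding P2_def A2_def by simp
    qed
    have "(1 + N * c) * (- (k * sinh (k * L)) * y2 x0) = (1 + N * c) * (sL * P1 + s0 * P2) - N * Wt * (I * (1 + N * c))"
      unfolding star by (simp add: algebra_simps)
    also have "\<dots> = ((1 + N * c) * sL * P1 - N * Wt * A1) + ((1 + N * c) * s0 * P2 - N * Wt * A2)"
      unfolding IA AA by (simp add: algebra_simps)
    finally have F: "0 \<le> (1 + N * c) * (k * sinh (k * L)) * (- y2 x0)"
      using K1 K2 K1v K2v by (simp add: algebra_simps)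
    have P: "0 < (1 + N * c) * (k * sinh (k * L))" using Nc0 k L by simp
    show ?thesis
    proof (rule ccontr)
      assume "\<not> y2 x0 \<le> 0"
      then have "- y2 x0 < 0" by simp
      then have "(1 + N * c) * (k * sinh (k * L)) * (- y2 x0) < 0" using P by (intro mult_pos_neg)
      then show False using F by simp
    qed
  qed
  have ypos: "0 \<le> y x0" if x0: "0 \<le> x0" "x0 \<le> L" for x0
  proof -
    have e1: "((\<lambda>x. x) has_real_derivative 1) (at x)" for x by (auto intro!: derivative_eq_intros)
    have e2: "((\<lambda>x. 1::real) has_real_derivative 0) (at x)" for x by (auto intro!: derivative_eq_intros)
    have e3: "((\<lambda>x. L - x) has_real_derivative -1) (at x)" for x by (auto intro!: derivative_eq_intros)
    have e4: "((\<lambda>x. -1::real) has_real_derivative 0) (at x)" for x by (auto intro!: derivative_eq_intros)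
    have c0: "continuous_on S (\<lambda>x::real. 0::real)" for S by (intro continuous_intros)
    have E5: "integral {0..x0} (\<lambda>x. x * y2 x) = x0 * y1 x0 - 0 * y1 0 - 1 * y x0 + 1 * y 0
        + integral {0..x0} (\<lambda>x. 0 * y x)"
      by (rule GY[OF _ _ _ e1 e2 c0]) (use x0 in auto)
    have E6: "integral {x0..L} (\<lambda>x. (L - x) * y2 x) = (L - L) * y1 L - (L - x0) * y1 x0 - (-1) * y L + (-1) * y x0
        + integral {x0..L} (\<lambda>x. 0 * y x)"
      by (rule GY[OF _ _ _ e3 e4 c0]) (use x0 in auto)
    have J5: "integral {0..x0} (\<lambda>x. x * y2 x) \<le> 0"
    proof -
      have "0 \<le> integral {0..x0} (\<lambda>x. x * (- y2 x))"
      proof (rule integral_nonneg)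
        show "(\<lambda>x. x * (- y2 x)) integrable_on {0..x0}"
          using x0 by (intro integrable_continuous_interval continuous_intros continuous_on_subset[OF y2c]) auto
        fix x assume "x \<in> {0..x0}"
        then show "0 \<le> x * (- y2 x)" using y2neg[of x] x0 by (auto intro: mult_nonneg_nonpos)
      qed
      then show ?thesis by simp
    qed
    have J6: "integral {x0..L} (\<lambda>x. (L - x) * y2 x) \<le> 0"
    proof -
      have "0 \<le> integral {x0..L} (\<lambda>x. (L - x) * (- y2 x))"
      proof (rule integral_nonneg)
        show "(\<lambda>x. (L - x) * (- y2 x)) integrable_on {x0..L}"
          using x0 by (intro integrable_continuous_interval continuous_intros continuous_on_subset[OF y2c]) auto
        fix x assume "x \<in> {x0..L}"
        then show "0 \<le> (L - x) * (- y2 x)" using y2neg[of x] x0 by (auto intro: mult_nonneg_nonpos)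
      qed
      then show ?thesis by simp
    qed
    have "(L - x0) * integral {0..x0} (\<lambda>x. x * y2 x) + x0 * integral {x0..L} (\<lambda>x. (L - x) * y2 x) = - (L * y x0)"
      unfolding E5 E6 using y0 yL by (simp add: algebra_simps)
    moreover have "(L - x0) * integral {0..x0} (\<lambda>x. x * y2 x) \<le> 0"
      using J5 x0 by (simp add: mult_nonneg_nonpos)
    moreover have "x0 * integral {x0..L} (\<lambda>x. (L - x) * y2 x) \<le> 0"
      using J6 x0 by (simp add: mult_nonneg_nonpos)
    ultimately have "0 \<le> L * y x0" by linarith
    then show ?thesis using L by (simp add: zero_le_mult_iff)
  qed
  show ?thesis using ypos y2neg by auto
qed

theorem theorem3p1:
  fixes L M N :: real and p y y1 y2 y3 y4 :: "real \<Rightarrow> real"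
  assumes "L > 0" and "M > 0"
    and "0 \<le> N" and "N \<le> 4 * M / L ^ 3 * sigma (sqrt M * L)"
    and "p absolutely_integrable_on {0..L}"
    and "W41_on L y y1 y2 y3 y4"
    and "AE x in lebesgue. x \<in> {0..L} \<longrightarrow>
           y4 x - M * y2 x + N * integral {0..L} y = p x"
    and "y 0 = 0" and "y L = 0" and "y2 0 = 0" and "y2 L = 0"
  shows "((AE x in lebesgue. x \<in> {0..L} \<longrightarrow> p x \<ge> 0) \<longrightarrow>
            (\<forall>x\<in>{0..L}. y x \<ge> 0 \<and> y2 x \<le> 0))
       \<and> ((AE x in lebesgue. x \<in> {0..L} \<longrightarrow> p x \<le> 0) \<longrightarrow>
            (\<forall>x\<in>{0..L}. y x \<le> 0 \<and> y2 x \<ge> 0))"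
proof (intro conjI impI)
  assume "AE x in lebesgue. x \<in> {0..L} \<longrightarrow> p x \<ge> 0"
  then show "\<forall>x\<in>{0..L}. y x \<ge> 0 \<and> y2 x \<le> 0"
    by (rule main_pos[OF assms])
next
  assume pneg: "AE x in lebesgue. x \<in> {0..L} \<longrightarrow> p x \<le> 0"
  have pai: "(\<lambda>x. - p x) absolutely_integrable_on {0..L}"
    using assms(5) unfolding absolutely_integrable_on_def by (simp add: integrable_neg)
  have W': "(\<forall>x\<in>{0..L}. (y has_real_derivative y1 x) (at x within {0..L})
               \<and> (y1 has_real_derivative y2 x) (at x within {0..L})
               \<and> (y2 has_real_derivative y3 x) (at x within {0..L}))
      \<and> y4 absolutely_integrable_on {0..L}
      \<and> (\<forall>x\<in>{0..L}. y3 x = y3 0 + integral {0..x} y4)" using assms(6) unfolding W41_on_def .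
  have W: "W41_on L (\<lambda>x. - y x) (\<lambda>x. - y1 x) (\<lambda>x. - y2 x) (\<lambda>x. - y3 x) (\<lambda>x. - y4 x)"
    unfolding W41_on_def
  proof (intro conjI ballI)
    fix x assume x: "x \<in> {0..L}"
    show "((\<lambda>x. - y x) has_real_derivative - y1 x) (at x within {0..L})"
      using W' x by (intro DERIV_minus) blast
    show "((\<lambda>x. - y1 x) has_real_derivative - y2 x) (at x within {0..L})"
      using W' x by (intro DERIV_minus) blast
    show "((\<lambda>x. - y2 x) has_real_derivative - y3 x) (at x within {0..L})"
      using W' x by (intro DERIV_minus) blast
    have "y3 x = y3 0 + integral {0..x} y4" using W' x by blast
    then show "- y3 x = - y3 0 + integral {0..x} (\<lambda>x. - y4 x)" by simp
  next
    show "(\<lambda>x. - y4 x) absolutely_integrable_on {0..L}"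
      using W' unfolding absolutely_integrable_on_def by (simp add: integrable_neg)
  qed
  have eq: "AE x in lebesgue. x \<in> {0..L} \<longrightarrow>
           - y4 x - M * (- y2 x) + N * integral {0..L} (\<lambda>x. - y x) = - p x"
    using assms(7) by eventually_elim (auto simp: algebra_simps)
  have pp: "AE x in lebesgue. x \<in> {0..L} \<longrightarrow> - p x \<ge> 0"
    using pneg by eventually_elim auto
  have "\<forall>x\<in>{0..L}. - y x \<ge> 0 \<and> - y2 x \<le> 0"
    by (rule main_pos[OF assms(1-4) pai W eq _ _ _ _ pp]) (use assms(8-11) in simp_all)
  then show "\<forall>x\<in>{0..L}. y x \<le> 0 \<and> y2 x \<ge> 0" by auto
qed

end
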